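(* Let $G=(V,E)$ be a finite connected chordal graph. (i) If $\operatorname{diam}(G)<2\operatorname{rad}(G)$ then, for every vertices $s\in V$ and $t\in F(s)$, there is a vertex $w\in I(s,t)\cap C(G)$ such that $t\in F(w)$. (ii) If $\operatorname{diam}(G)=2\operatorname{rad}(G)$ then, for every vertices $s\in V$ and $t\in F(s)$, there is a vertex $w\in I(s,t)\cap C^1(G)$ such that $t\in F(w)$.
   Context: A graph is chordal if every induced cycle of length at least 4 has a chord. $d$ is the shortest-path distance, $e(v)=\max_u d(v,u)$, $\operatorname{rad}(G)=\min_v e(v)$, $\operatorname{diam}(G)=\max_v e(v)$. $F(s)=\{v: d(v,s)=e(s)\}$; $C(G)=\{c: e(c)=\operatorname{rad}(G)\}$; $C^1(G)=\{v: e(v)\le\operatorname{rad}(G)+1\}$; $I(u,v)=\{x: d(u,x)+d(x,v)=d(u,v)\}$. *)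

theory Defs
  imports Main
begin

definition graph :: "'a set \<Rightarrow> ('a \<Rightarrow> 'a \<Rightarrow> bool) \<Rightarrow> bool" where
  "graph V E \<longleftrightarrow> finite V \<and> V \<noteq> {} \<and> (\<forall>u v. E u v \<longrightarrow> u \<in> V \<and> v \<in> V)
     \<and> (\<forall>u v. E u v \<longrightarrow> E v u) \<and> (\<forall>v. \<not> E v v)"

definition walk :: "'a set \<Rightarrow> ('a \<Rightarrow> 'a \<Rightarrow> bool) \<Rightarrow> 'a list \<Rightarrow> bool" where
  "walk V E p \<longleftrightarrow> p \<noteq> [] \<and> set p \<subseteq> V \<and> (\<forall>i. Suc i < length p \<longrightarrow> E (p ! i) (p ! Suc i))"

definition connected :: "'a set \<Rightarrow> ('a \<Rightarrow> 'a \<Rightarrow> bool) \<Rightarrow> bool" where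
  "connected V E \<longleftrightarrow> (\<forall>u\<in>V. \<forall>v\<in>V. \<exists>p. walk V E p \<and> hd p = u \<and> last p = v)"

definition dist :: "'a set \<Rightarrow> ('a \<Rightarrow> 'a \<Rightarrow> bool) \<Rightarrow> 'a \<Rightarrow> 'a \<Rightarrow> nat" where
  "dist V E u v = (LEAST n. \<exists>p. walk V E p \<and> hd p = u \<and> last p = v \<and> length p = Suc n)"

definition cycle :: "'a set \<Rightarrow> ('a \<Rightarrow> 'a \<Rightarrow> bool) \<Rightarrow> 'a list \<Rightarrow> bool" where
  "cycle V E c \<longleftrightarrow> length c \<ge> 3 \<and> distinct c \<and> set c \<subseteq> V
     \<and> (\<forall>i < length c. E (c ! i) (c ! ((i + 1) mod length c)))"

definition has_chord :: "('a \<Rightarrow> 'a \<Rightarrow> bool) \<Rightarrow> 'a list \<Rightarrow> bool" where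
  "has_chord E c \<longleftrightarrow> (\<exists>i j. i < length c \<and> j < length c \<and> i \<noteq> j
     \<and> j \<noteq> (i + 1) mod length c \<and> i \<noteq> (j + 1) mod length c \<and> E (c ! i) (c ! j))"

text \<open>Chordal: every cycle of length at least 4 has a chord (equivalently, every
  induced cycle of length at least 4 has a chord, i.e. there is none).\<close>
definition chordal :: "'a set \<Rightarrow> ('a \<Rightarrow> 'a \<Rightarrow> bool) \<Rightarrow> bool" where
  "chordal V E \<longleftrightarrow> (\<forall>c. cycle V E c \<and> length c \<ge> 4 \<longrightarrow> has_chord E c)"

definition ecc :: "'a set \<Rightarrow> ('a \<Rightarrow> 'a \<Rightarrow> bool) \<Rightarrow> 'a \<Rightarrow> nat" where
  "ecc V E v = Max ((\<lambda>u. dist V E v u) ` V)"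

definition rad :: "'a set \<Rightarrow> ('a \<Rightarrow> 'a \<Rightarrow> bool) \<Rightarrow> nat" where
  "rad V E = Min (ecc V E ` V)"

definition diam :: "'a set \<Rightarrow> ('a \<Rightarrow> 'a \<Rightarrow> bool) \<Rightarrow> nat" where
  "diam V E = Max (ecc V E ` V)"

definition far :: "'a set \<Rightarrow> ('a \<Rightarrow> 'a \<Rightarrow> bool) \<Rightarrow> 'a \<Rightarrow> 'a set" where
  "far V E s = {v \<in> V. dist V E v s = ecc V E s}"

definition center :: "'a set \<Rightarrow> ('a \<Rightarrow> 'a \<Rightarrow> bool) \<Rightarrow> 'a set" where
  "center V E = {c \<in> V. ecc V E c = rad V E}"

definition center1 :: "'a set \<Rightarrow> ('a \<Rightarrow> 'a \<Rightarrow> bool) \<Rightarrow> 'a set" where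
  "center1 V E = {v \<in> V. ecc V E v \<le> rad V E + 1}"

definition interval :: "'a set \<Rightarrow> ('a \<Rightarrow> 'a \<Rightarrow> bool) \<Rightarrow> 'a \<Rightarrow> 'a \<Rightarrow> 'a set" where
  "interval V E u v = {x \<in> V. dist V E u x + dist V E x v = dist V E u v}"

end

theory Submission
  imports Defs
begin


lemma walk_iff: "walk V E p \<longleftrightarrow> p \<noteq> [] \<and> set p \<subseteq> V \<and> successively E p"
  unfolding walk_def successively_conv_nth by blast

locale cg =
  fixes V :: "'a set" and E :: "'a \<Rightarrow> 'a \<Rightarrow> bool"
  assumes graph: "graph V E" and conn: "connected V E" and chord: "chordal V E"
begin

abbreviation "d \<equiv> dist V E"

lemma Esym: "E u v \<Longrightarrow> E v u" using graph unfolding graph_def by blast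
lemma Eirr: "\<not> E v v" using graph unfolding graph_def by blast
lemma EV: "E u v \<Longrightarrow> u \<in> V \<and> v \<in> V" using graph unfolding graph_def by blast
lemma finV: "finite V" using graph unfolding graph_def by blast
lemma neV: "V \<noteq> {}" using graph unfolding graph_def by blast

lemma dist_walk_ex:
  assumes "u \<in> V" "v \<in> V"
  shows "\<exists>p. walk V E p \<and> hd p = u \<and> last p = v \<and> length p = Suc (d u v)"
proof -
  from conn assms obtain p where p: "walk V E p" "hd p = u" "last p = v"
    unfolding connected_def by blast
  then have "\<exists>n p. walk V E p \<and> hd p = u \<and> last p = v \<and> length p = Suc n"
    by (intro exI[of _ "length p - 1"] exI[of _ p]) (auto simp: walk_def)
  then show ?thesis unfolding dist_def by (rule LeastI_ex)
qed

lemma dist_le: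
  assumes "walk V E p" "hd p = u" "last p = v"
  shows "d u v \<le> length p - 1"
proof -
  have "length p = Suc (length p - 1)" using assms(1) by (cases p) (auto simp: walk_def)
  then show ?thesis unfolding dist_def using assms by (intro Least_le) blast
qed

lemma walk_join:
  assumes "walk V E p" "walk V E q" "last p = hd q"
  shows "walk V E (p @ tl q) \<and> hd (p @ tl q) = hd p \<and> last (p @ tl q) = last q
     \<and> length (p @ tl q) = length p + length q - 1 \<and> set (p @ tl q) \<subseteq> set p \<union> set q"
proof -
  have pq: "p \<noteq> []" "q \<noteq> []" using assms by (auto simp: walk_iff)
  then obtain a q' where q: "q = a # q'" by (cases q) auto
  have "successively E (p @ q')"
    using assms pq q by (auto simp: walk_iff successively_append_iff successively_Cons)
  moreover have "last (p @ q') = last q" using pq q assms(3) by (cases "q' = []") auto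
  moreover have "set (p @ q') \<subseteq> set p \<union> set q" using q by auto
  ultimately show ?thesis using assms pq q by (auto simp: walk_iff)
qed

lemma walk_rev: "walk V E p \<Longrightarrow> walk V E (rev p)"
  unfolding walk_iff using Esym by (auto elim: successively_mono)

lemma dist_sym: assumes "u \<in> V" "v \<in> V" shows "d u v = d v u"
proof -
  have *: "d x y \<le> d y x" if xV: "x \<in> V" and yV: "y \<in> V" for x y
  proof -
    obtain p where p: "walk V E p" "hd p = y" "last p = x" "length p = Suc (d y x)"
      using dist_walk_ex[OF yV xV] by blast
    have "hd (rev p) = x" "last (rev p) = y" using p by (auto simp: hd_rev last_rev walk_def)
    then show ?thesis using dist_le[OF walk_rev[OF p(1)]] p by auto
  qed
  show ?thesis using *[OF assms] *[OF assms(2,1)] by simp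
qed

lemma dist_tri: assumes "u \<in> V" "v \<in> V" "w \<in> V" shows "d u w \<le> d u v + d v w"
proof -
  obtain p where p: "walk V E p" "hd p = u" "last p = v" "length p = Suc (d u v)"
    using dist_walk_ex assms by blast
  obtain q where q: "walk V E q" "hd q = v" "last q = w" "length q = Suc (d v w)"
    using dist_walk_ex assms by blast
  show ?thesis using walk_join[OF p(1) q(1)] p q dist_le[of "p @ tl q" u w] by auto
qed

lemma dist_self: "u \<in> V \<Longrightarrow> d u u = 0"
  using dist_le[of "[u]" u u] by (auto simp: walk_def)

lemma dist_0: assumes "u \<in> V" "v \<in> V" "d u v = 0" shows "u = v"
proof -
  obtain p where p: "walk V E p" "hd p = u" "last p = v" "length p = Suc (d u v)"
    using dist_walk_ex assms by blast
  then obtain a where "p = [a]" using assms(3) by (cases p) auto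
  then show ?thesis using p by auto
qed

lemma dist_edge: assumes "E u v" shows "d u v = 1"
proof -
  have "walk V E [u, v]" using assms EV by (auto simp: walk_iff)
  then have "d u v \<le> 1" using dist_le[of "[u,v]" u v] by auto
  moreover have "u \<noteq> v" using assms Eirr by auto
  ultimately show ?thesis using dist_0 EV assms by fastforce
qed

lemma dist_1E: assumes "u \<in> V" "v \<in> V" "d u v = 1" shows "E u v"
proof -
  obtain p where p: "walk V E p" "hd p = u" "last p = v" "length p = Suc (d u v)"
    using dist_walk_ex assms by blast
  then obtain a b where "p = [a, b]" using assms(3)
    by (cases p; cases "tl p") auto
  then show ?thesis using p by (auto simp: walk_iff)
qed

lemma dist_adj: assumes "E x y" "u \<in> V" shows "d x u \<le> d y u + 1"
  using dist_tri[of x y u] dist_edge[OF assms(1)] EV[OF assms(1)] assms(2) by auto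

end


context cg
begin

lemma succ_take: "successively P xs \<Longrightarrow> successively P (take n xs)"
  by (metis append_take_drop_id successively_append_iff)
lemma succ_drop: "successively P xs \<Longrightarrow> successively P (drop n xs)"
  by (metis append_take_drop_id successively_append_iff)

lemma succ_suffix: "successively P (xs @ ys) \<Longrightarrow> successively P ys"
  by (simp add: successively_append_iff)

lemma geodesic:
  assumes p: "walk V E p" "hd p = a" "last p = b" "length p = Suc (d a b)" and i: "i < length p"
  shows "d a (p!i) = i \<and> d (p!i) b = d a b - i"
proof -
  have pV: "set p \<subseteq> V" "p \<noteq> []" "successively E p" using p(1) by (auto simp: walk_iff)
  have aV: "a \<in> V" "b \<in> V" using pV p by auto
  have ziV: "p!i \<in> V" using pV i by auto
  have w1: "walk V E (take (Suc i) p)" using pV succ_take i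
    by (auto simp: walk_iff dest: in_set_takeD)
  have "hd (take (Suc i) p) = a" using p pV by (simp add: hd_take)
  moreover have "last (take (Suc i) p) = p!i" using i by (simp add: take_Suc_conv_app_nth)
  ultimately have 1: "d a (p!i) \<le> i" using dist_le[OF w1] i by simp
  have w2: "walk V E (drop i p)" using pV succ_drop i
    by (auto simp: walk_iff dest: in_set_dropD)
  have "hd (drop i p) = p!i" using i by (simp add: hd_drop_conv_nth)
  moreover have "last (drop i p) = b" using i p by simp
  ultimately have 2: "d (p!i) b \<le> length p - i - 1" using dist_le[OF w2] i by simp
  have "d a b \<le> d a (p!i) + d (p!i) b" using dist_tri aV ziV by blast
  then show ?thesis using 1 2 p(4) i by auto
qed

lemma geo_path:
  assumes "a \<in> V" "b \<in> V"
  shows "\<exists>p. walk V E p \<and> hd p = a \<and> last p = b \<and> (\<forall>z\<in>set p. d a z + d z b = d a b)"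
proof -
  obtain p where p: "walk V E p" "hd p = a" "last p = b" "length p = Suc (d a b)"
    using dist_walk_ex assms by blast
  have "\<forall>z\<in>set p. d a z + d z b = d a b"
  proof
    fix z assume "z \<in> set p"
    then obtain i where "i < length p" "z = p!i" by (auto simp: in_set_conv_nth)
    then show "d a z + d z b = d a b" using geodesic[OF p] p(4) by auto
  qed
  then show ?thesis using p by blast
qed

lemma geo_step:
  assumes "a \<in> V" "b \<in> V" "a \<noteq> b"
  shows "\<exists>q. walk V E q \<and> E a (hd q) \<and> last q = b \<and> (\<forall>z\<in>set q. z \<noteq> a \<and> d a z + d z b = d a b)"
proof -
  obtain p where p: "walk V E p" "hd p = a" "last p = b" "length p = Suc (d a b)"
    using dist_walk_ex assms by blast
  have "d a b \<noteq> 0" using dist_0 assms by blast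
  then obtain x y p' where pp: "p = x # y # p'" using p(4)
    by (cases p; cases "tl p") auto
  have w: "walk V E (y # p')" "E x y" using p(1) pp by (auto simp: walk_iff)
  have "\<forall>z\<in>set (y#p'). z \<noteq> a \<and> d a z + d z b = d a b"
  proof
    fix z assume "z \<in> set (y#p')"
    then obtain i where i: "i < length (y#p')" "z = (y#p')!i" by (metis in_set_conv_nth)
    have "z = p ! Suc i" using i pp by simp
    then have "d a z = Suc i" "d z b = d a b - Suc i" using geodesic[OF p, of "Suc i"] i pp by auto
    then show "z \<noteq> a \<and> d a z + d z b = d a b" using dist_self assms p(4) pp i by auto
  qed
  moreover have "last (y#p') = b" using p pp by simp
  ultimately show ?thesis using w p pp by (intro exI[of _ "y#p'"]) auto
qed

lemma cyc_tri:
  "distinct p \<Longrightarrow> length p \<ge> 3 \<Longrightarrow> set p \<subseteq> V \<Longrightarrow> successively E p \<Longrightarrow> E (last p) (hd p)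
   \<Longrightarrow> \<exists>z\<in>set p. z \<noteq> hd p \<and> z \<noteq> last p \<and> E (hd p) z \<and> E z (last p)"
proof (induction p rule: measure_induct_rule[where f=length])
  case (less p)
  define n where "n = length p"
  show ?case
  proof (cases "n = 3")
    case True
    then obtain a b c where "p = [a,b,c]" unfolding n_def
      by (cases p; cases "tl p"; cases "tl (tl p)"; cases "tl (tl (tl p))") auto
    then show ?thesis using less.prems by auto
  next
    case False
    then have n4: "n \<ge> 4" using less.prems n_def by auto
    have cyc: "cycle V E p" unfolding cycle_def
    proof (intro conjI allI impI)
      fix i assume i: "i < length p"
      show "E (p ! i) (p ! ((i + 1) mod length p))"
      proof (cases "Suc i < length p")
        case True
        then show ?thesis using successively_nth[OF less.prems(4) True] by simp
      next
        case False
        then have si: "Suc i = length p" using i by auto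
        then have "i = length p - 1" "(i+1) mod length p = 0" by auto
        then show ?thesis using less.prems(5) i
          by (metis One_nat_def hd_conv_nth last_conv_nth less_nat_zero_code list.size(3))
      qed
    qed (use less.prems in auto)
    then have "has_chord E p" using chord n4 n_def unfolding chordal_def by auto
    then obtain i j where ij: "i < n" "j < n" "i \<noteq> j" "j \<noteq> (i + 1) mod n" "i \<noteq> (j + 1) mod n"
      "E (p ! i) (p ! j)" unfolding has_chord_def n_def by blast
    have "\<exists>i j. i < j \<and> j < n \<and> i + 2 \<le> j \<and> \<not> (i = 0 \<and> j = n - 1) \<and> E (p!i) (p!j)"
    proof (cases "i < j")
      case True
      have "(i+1) mod n = i + 1" using True ij by auto
      moreover have "j = n - 1 \<Longrightarrow> (j+1) mod n = 0" using ij by auto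
      ultimately show ?thesis using True ij by (intro exI[of _ i] exI[of _ j]) auto
    next
      case False
      then have ji: "j < i" using ij by auto
      have "(j+1) mod n = j + 1" using ji ij by auto
      moreover have "i = n - 1 \<Longrightarrow> (i+1) mod n = 0" using ij by auto
      ultimately show ?thesis using ji ij Esym by (intro exI[of _ j] exI[of _ i]) auto
    qed
    then obtain i j where ij: "i < j" "j < n" "i + 2 \<le> j" "\<not> (i = 0 \<and> j = n - 1)" "E (p!i) (p!j)"
      by blast
    define p' where "p' = take (Suc i) p @ drop j p"
    have len: "length p' = Suc i + (n - j)" using ij n_def unfolding p'_def by auto
    have dist': "distinct p'" unfolding p'_def using less.prems(1) ij
      by (auto simp: set_take_disj_set_drop_if_distinct)
    have t1: "successively E (take (Suc i) p)" using succ_take less.prems(4) by blast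
    have t2: "successively E (drop j p)" using succ_drop less.prems(4) by blast
    have t3: "last (take (Suc i) p) = p!i" using ij n_def by (simp add: take_Suc_conv_app_nth)
    have t4: "hd (drop j p) = p!j" using ij n_def by (simp add: hd_drop_conv_nth)
    have succ': "successively E p'" unfolding p'_def successively_append_iff
      using t1 t2 t3 t4 ij by auto
    have hd': "hd p' = hd p" unfolding p'_def using n_def n4 by (cases p) auto
    have last': "last p' = last p" unfolding p'_def using ij n_def by simp
    have set': "set p' \<subseteq> set p" unfolding p'_def by (auto dest: in_set_takeD in_set_dropD)
    have "\<exists>z\<in>set p'. z \<noteq> hd p' \<and> z \<noteq> last p' \<and> E (hd p') z \<and> E z (last p')"
      using less.IH[of p'] len ij n_def dist' succ' set' less.prems hd' last' by auto
    then show ?thesis using hd' last' set' by (metis subsetD)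
  qed
qed

lemma reduce_walk:
  "successively E q \<Longrightarrow> q \<noteq> [] \<Longrightarrow> \<exists>q'. q' \<noteq> [] \<and> distinct q' \<and> successively E q'
     \<and> set q' \<subseteq> set q \<and> hd q' = hd q \<and> last q' = last q"
proof (induction q rule: measure_induct_rule[where f=length])
  case (less q)
  show ?case
  proof (cases "distinct q")
    case True then show ?thesis using less.prems by blast
  next
    case False
    then obtain xs ys zs y where q: "q = xs @ [y] @ ys @ [y] @ zs" using not_distinct_decomp by blast
    define q2 where "q2 = xs @ [y] @ zs"
    have s1: "successively E (y # zs)" using less.prems(1) succ_suffix[of E "xs @ [y] @ ys" "y # zs"]
      unfolding q by simp
    have "successively E q2" using less.prems(1) s1 unfolding q q2_def
      by (auto simp: successively_append_iff)
    moreover have "hd q2 = hd q" unfolding q q2_def by (cases xs) auto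
    moreover have "last q2 = last q" unfolding q q2_def by (cases zs) auto
    moreover have "set q2 \<subseteq> set q" unfolding q q2_def by auto
    moreover have "length q2 < length q" unfolding q q2_def by auto
    ultimately show ?thesis using less.IH[of q2] unfolding q2_def by fastforce
  qed
qed

lemma lemW:
  assumes "E x y" "walk V E q" "E x (hd q)" "E (last q) y" "x \<notin> set q" "y \<notin> set q"
  shows "\<exists>z\<in>set q. E x z \<and> E z y"
proof -
  have q: "q \<noteq> []" "set q \<subseteq> V" "successively E q" using assms(2) by (auto simp: walk_iff)
  obtain q' where q': "q' \<noteq> []" "distinct q'" "successively E q'" "set q' \<subseteq> set q"
    "hd q' = hd q" "last q' = last q" using reduce_walk q by metis
  define p where "p = x # q' @ [y]"
  have "distinct p" using q' assms Eirr unfolding p_def by auto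
  moreover have "length p \<ge> 3" using q' unfolding p_def by (cases q') auto
  moreover have "set p \<subseteq> V" using q q' EV assms(1) unfolding p_def by auto
  moreover have "successively E p" using q' assms unfolding p_def
    by (auto simp: successively_append_iff successively_Cons)
  moreover have "E (last p) (hd p)" using assms(1) Esym unfolding p_def by auto
  ultimately obtain z where "z \<in> set p" "z \<noteq> hd p" "z \<noteq> last p" "E (hd p) z" "E z (last p)"
    using cyc_tri by blast
  then show ?thesis using q' unfolding p_def by auto
qed

end


context cg
begin

lemma walkV: "walk V E q \<Longrightarrow> z \<in> set q \<Longrightarrow> z \<in> V"
  by (auto simp: walk_iff)

lemma dist_pos: "a \<in> V \<Longrightarrow> b \<in> V \<Longrightarrow> a \<noteq> b \<Longrightarrow> d a b \<ge> 1"
  using dist_0 by fastforce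

lemma next_step:
  assumes "a \<in> V" "b \<in> V" "a \<noteq> b"
  shows "\<exists>y. E a y \<and> d y b + 1 = d a b"
proof -
  obtain q where q: "walk V E q" "E a (hd q)" "last q = b" "\<forall>z\<in>set q. z \<noteq> a \<and> d a z + d z b = d a b"
    using geo_step[OF assms] by blast
  have "hd q \<in> set q" using q(1) by (auto simp: walk_iff)
  then show ?thesis using q dist_edge[OF q(2)] by (intro exI[of _ "hd q"]) auto
qed

lemma join3:
  assumes "walk V E p" "walk V E q" "last p = hd q"
  obtains r where "walk V E r" "hd r = hd p" "last r = last q" "set r \<subseteq> set p \<union> set q"
  using walk_join[OF assms] by blast

lemma TC:
  assumes e: "E x y" and u: "u \<in> V" and dx: "d x u = m" and dy: "d y u = m" and m: "m \<ge> 1"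
  shows "\<exists>z. E x z \<and> E z y \<and> d z u + 1 = m"
proof -
  have xV: "x \<in> V" "y \<in> V" using EV e by auto
  have xu: "x \<noteq> u" "y \<noteq> u" using dx dy m dist_self u by auto
  obtain qx where qx: "walk V E qx" "E x (hd qx)" "last qx = u" "\<forall>z\<in>set qx. z \<noteq> x \<and> d x z + d z u = d x u"
    using geo_step[OF xV(1) u xu(1)] by blast
  obtain qy where qy: "walk V E qy" "E y (hd qy)" "last qy = u" "\<forall>z\<in>set qy. z \<noteq> y \<and> d y z + d z u = d y u"
    using geo_step[OF xV(2) u xu(2)] by blast
  have lv: "\<forall>z\<in>set qx \<union> set qy. z \<in> V \<and> d z u + 1 \<le> m"
  proof
    fix z assume z: "z \<in> set qx \<union> set qy"
    show "z \<in> V \<and> d z u + 1 \<le> m"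
    proof (cases "z \<in> set qx")
      case True
      then have "z \<in> V" "z \<noteq> x" using walkV qx by auto
      then show ?thesis using qx(4) True dist_pos[of x z] xV dx by fastforce
    next
      case False
      then have zy: "z \<in> set qy" using z by auto
      then have "z \<in> V" "z \<noteq> y" using walkV qy by auto
      then show ?thesis using qy(4) zy dist_pos[of y z] xV dy by fastforce
    qed
  qed
  have wr: "walk V E (rev qy)" "hd (rev qy) = u" "last (rev qy) = hd qy"
    using walk_rev qy by (auto simp: walk_iff hd_rev last_rev)
  obtain W where W: "walk V E W" "hd W = hd qx" "last W = hd qy" "set W \<subseteq> set qx \<union> set qy"
    using join3[OF qx(1) wr(1)] qx(3) wr by auto
  have "x \<notin> set W"
  proof
    assume "x \<in> set W" then have "d x u + 1 \<le> m" using lv W(4) by blast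
    then show False using dx by simp
  qed
  moreover have "y \<notin> set W"
  proof
    assume "y \<in> set W" then have "d y u + 1 \<le> m" using lv W(4) by blast
    then show False using dy by simp
  qed
  ultimately obtain z where z: "z \<in> set W" "E x z" "E z y"
    using lemW[OF e W(1)] W qx(2) qy(2) Esym by auto
  have "d x u \<le> d z u + 1" using dist_adj[OF z(2) u] .
  moreover have "d z u + 1 \<le> m" using lv W(4) z(1) by blast
  ultimately show ?thesis using z dx by (intro exI[of _ z]) auto
qed

end

context cg begin
lemma alpha1:
  assumes e: "E v w" and uV: "u \<in> V" and xV: "x \<in> V"
    and h1: "d u w = d u v + 1" and h2: "d v x = d w x + 1"
  shows "d u v + d w x \<le> d u x"
proof (rule ccontr)
  assume neg: "\<not> ?thesis"
  have vV: "v \<in> V" "w \<in> V" using EV e by auto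
  have vu: "v \<noteq> u"
  proof
    assume "v = u" then have "d u x = d w x + 1" using h2 by simp
    then show False using neg \<open>v = u\<close> dist_self uV by simp
  qed
  have wx: "w \<noteq> x"
  proof
    assume "w = x" then have "d u x = d u v + 1" using h1 by simp
    then show False using neg \<open>w = x\<close> dist_self xV by simp
  qed
  obtain qw where qw: "walk V E qw" "E w (hd qw)" "last qw = x" "\<forall>z\<in>set qw. z \<noteq> w \<and> d w z + d z x = d w x"
    using geo_step[OF vV(2) xV wx] by blast
  obtain R where R: "walk V E R" "hd R = x" "last R = u" "\<forall>z\<in>set R. d x z + d z u = d x u"
    using geo_path[OF xV uV] by blast
  obtain qv where qv: "walk V E qv" "E v (hd qv)" "last qv = u" "\<forall>z\<in>set qv. z \<noteq> v \<and> d v z + d z u = d v u"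
    using geo_step[OF vV(1) uV vu] by blast
  obtain W1 where W1: "walk V E W1" "hd W1 = hd qw" "last W1 = u" "set W1 \<subseteq> set qw \<union> set R"
    using join3[OF qw(1) R(1)] qw R by auto
  have wr: "walk V E (rev qv)" "hd (rev qv) = u" "last (rev qv) = hd qv"
    using walk_rev qv by (auto simp: walk_iff hd_rev last_rev)
  obtain W where W0: "walk V E W" "hd W = hd W1" "last W = last (rev qv)" "set W \<subseteq> set W1 \<union> set (rev qv)"
    using join3[OF W1(1) wr(1)] W1(3) wr(2) by metis
  have W: "walk V E W" "hd W = hd qw" "last W = hd qv" "set W \<subseteq> set qw \<union> set R \<union> set qv"
    using W0 W1 wr by auto
  have sux: "d u x = d x u" "d u v = d v u" "d u w = d w u" using dist_sym uV xV vV by auto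
  have dvw: "d v w = 1" "d w v = 1" using dist_edge e Esym by auto
  have nin: "w \<notin> set W \<and> v \<notin> set W"
  proof -
    have "w \<notin> set qw" using qw(4) by auto
    moreover have "v \<notin> set qw" using qw(4) dvw h2 by fastforce
    moreover have "w \<notin> set R"
    proof
      assume "w \<in> set R" then have "d x w + d w u = d x u" using R(4) by blast
      moreover have "d x w = d w x" using dist_sym xV vV by auto
      ultimately show False using neg h1 sux by linarith
    qed
    moreover have "v \<notin> set R"
    proof
      assume "v \<in> set R" then have "d x v + d v u = d x u" using R(4) by blast
      moreover have "d x v = d v x" using dist_sym xV vV by auto
      ultimately show False using neg h2 sux by linarith
    qed
    moreover have "v \<notin> set qv" using qv(4) by auto
    moreover have "w \<notin> set qv" using qv(4) dvw h1 sux by fastforce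
    ultimately show ?thesis using W(4) by blast
  qed
  obtain z where z: "z \<in> set W" "E w z" "E z v"
    using lemW[of w v W] Esym e W qw(2) qv(2) nin by auto
  have zV: "z \<in> V" using walkV W z by auto
  have a1: "d v x \<le> d z x + 1" using dist_adj[OF Esym[OF z(3)] xV] .
  have a2: "d w u \<le> d z u + 1" using dist_adj[OF z(2) uV] .
  show False
  proof (cases "z \<in> set qw")
    case True
    then have "z \<noteq> w" "d w z + d z x = d w x" using qw(4) by auto
    then show ?thesis using a1 h2 dist_pos[OF vV(2) zV] by auto
  next
    case F1: False
    show ?thesis
    proof (cases "z \<in> set qv")
      case True
      then have "z \<noteq> v" "d v z + d z u = d v u" using qv(4) by auto
      then show ?thesis using a2 h1 sux dist_pos[OF vV(1) zV] by auto
    next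
      case False
      then have "z \<in> set R" using F1 z W(4) by auto
      then have "d x z + d z u = d x u" using R(4) by auto
      moreover have "d x z = d z x" using dist_sym xV zV by auto
      ultimately show ?thesis using a1 a2 h1 h2 sux neg by auto
    qed
  qed
qed

end

context cg begin
lemma clique:
  assumes e1: "E v w1" and e2: "E v w2" and cV: "c \<in> V"
    and h1: "d w1 c + 1 = d v c" and h2: "d w2 c + 1 = d v c" and ne: "w1 \<noteq> w2"
  shows "E w1 w2"
proof -
  have V: "v \<in> V" "w1 \<in> V" "w2 \<in> V" using EV e1 e2 by auto
  have w1c: "w1 \<noteq> c"
  proof
    assume "w1 = c"
    then have "d w2 c = 0" using h1 h2 dist_self cV by simp
    then show False using dist_0[OF V(3) cV] ne \<open>w1 = c\<close> by simp
  qed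
  obtain q1 where q1: "walk V E q1" "E w1 (hd q1)" "last q1 = c" "\<forall>z\<in>set q1. z \<noteq> w1 \<and> d w1 z + d z c = d w1 c"
    using geo_step[OF V(2) cV w1c] by blast
  obtain p2 where p2: "walk V E p2" "hd p2 = w2" "last p2 = c" "\<forall>z\<in>set p2. d w2 z + d z c = d w2 c"
    using geo_path[OF V(3) cV] by blast
  have wr: "walk V E (rev p2)" "hd (rev p2) = c" "last (rev p2) = w2"
    using walk_rev p2 by (auto simp: walk_iff hd_rev last_rev)
  obtain W where W: "walk V E W" "hd W = hd q1" "last W = w2" "set W \<subseteq> set q1 \<union> set p2"
    using join3[OF q1(1) wr(1)] q1 wr by auto
  have p1: "\<forall>z\<in>set q1. d z c + 2 \<le> d v c"
  proof
    fix z assume z: "z \<in> set q1"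
    then have "z \<in> V" "z \<noteq> w1" "d w1 z + d z c = d w1 c" using q1 walkV by auto
    moreover have "d w1 z \<ge> 1" using dist_pos[OF V(2)] calculation by blast
    ultimately show "d z c + 2 \<le> d v c" using h1 by simp
  qed
  have "v \<notin> set q1"
  proof
    assume "v \<in> set q1" then have "d v c + 2 \<le> d v c" using p1 by blast
    then show False by simp
  qed
  moreover have "v \<notin> set p2"
  proof
    assume "v \<in> set p2" then have "d w2 v + d v c = d w2 c" using p2(4) by blast
    then show False using h2 by simp
  qed
  moreover have "w1 \<notin> set q1" using q1(4) by auto
  moreover have "w1 \<notin> set p2"
  proof
    assume "w1 \<in> set p2" then have "d w2 w1 + d w1 c = d w2 c" using p2(4) by blast
    then have "d w2 w1 = 0" using h1 h2 by simp
    then show False using dist_0[OF V(3) V(2)] ne by simp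
  qed
  ultimately have nin: "w1 \<notin> set W" "v \<notin> set W" using W(4) by blast+
  obtain z where z: "z \<in> set W" "E w1 z" "E z v"
    using lemW[OF Esym[OF e1] W(1)] W(2,3) q1(2) Esym[OF e2] nin by auto
  have zV: "z \<in> V" using walkV W z by auto
  have a: "d v c \<le> d z c + 1" using dist_adj[OF Esym[OF z(3)] cV] .
  have "z \<notin> set q1"
  proof
    assume "z \<in> set q1" then have "d z c + 2 \<le> d v c" using p1 by blast
    then show False using a by simp
  qed
  then have "z \<in> set p2" using z W by auto
  then have "d w2 z + d z c = d w2 c" using p2(4) by blast
  then have "d w2 z = 0" using a h2 by simp
  then have "z = w2" using dist_0[OF V(3) zV] by simp
  then show ?thesis using z by simp
qed

end


context cg
begin

abbreviation "ec \<equiv> ecc V E"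

lemma ecc_ge: "v \<in> V \<Longrightarrow> u \<in> V \<Longrightarrow> d v u \<le> ec v"
  unfolding ecc_def using finV by (intro Max_ge) auto

lemma ecc_ex: "v \<in> V \<Longrightarrow> \<exists>u\<in>V. d v u = ec v"
proof -
  have "ec v \<in> (\<lambda>u. d v u) ` V" unfolding ecc_def using finV neV by (intro Max_in) auto
  then show ?thesis by auto
qed

lemma ecc_le: "(\<And>u. u \<in> V \<Longrightarrow> d v u \<le> k) \<Longrightarrow> ec v \<le> k"
  unfolding ecc_def using finV neV by (subst Max_le_iff) auto

lemma rad_le: "v \<in> V \<Longrightarrow> rad V E \<le> ec v"
  unfolding rad_def using finV by (intro Min_le) auto

lemma rad_ex: "\<exists>c\<in>V. ec c = rad V E"
proof -
  have "rad V E \<in> ec ` V" unfolding rad_def using finV neV by (intro Min_in) auto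
  then show ?thesis by auto
qed

lemma diam_ge: "v \<in> V \<Longrightarrow> ec v \<le> diam V E"
  unfolding diam_def using finV by (intro Max_ge) auto

lemma dist_diam: "u \<in> V \<Longrightarrow> v \<in> V \<Longrightarrow> d u v \<le> diam V E"
  using ecc_ge diam_ge le_trans by blast

lemma descent:
  assumes vV: "v \<in> V" and k1: "rad V E + 1 \<le> ec v" and k2: "diam V E + 3 \<le> 2 * ec v"
  shows "\<exists>w. E v w \<and> ec w < ec v"
proof -
  define k where "k = ec v"
  define r where "r = rad V E"
  obtain c where cV: "c \<in> V" and ecc: "ec c = r" using rad_ex r_def by blast
  have rb: "\<And>u. u \<in> V \<Longrightarrow> d u c \<le> r"
    using ecc_ge[OF cV] dist_sym cV ecc by fastforce
  define dd where "dd = d v c"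
  have vc: "v \<noteq> c" using ecc k1 r_def by auto
  have dd1: "dd \<ge> 1" using dist_pos[OF vV cV vc] dd_def by simp
  show ?thesis
  proof (cases "dd = 1")
    case True
    then have "E v c" using dist_1E[OF vV cV] dd_def by simp
    then show ?thesis using ecc k1 r_def by auto
  next
    case False
    then have dd2: "dd \<ge> 2" using dd1 by simp
    define X where "X = {w. E v w \<and> d w c + 1 = dd}"
    have XV: "X \<subseteq> V" unfolding X_def using EV by auto
    have A0: "d w u \<le> d v u" if w: "w \<in> X" and uV: "u \<in> V" and ku: "k \<le> d v u + 1" for w u
    proof (rule ccontr)
      assume nt: "\<not> d w u \<le> d v u"
      have e: "E v w" "d w c + 1 = dd" using w X_def by auto
      then have wV: "w \<in> V" using EV by auto
      have "d w u \<le> d v u + 1" using dist_adj[OF Esym[OF e(1)] uV] .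
      then have "d w u = d v u + 1" using nt by simp
      then have "d u w = d u v + 1" using dist_sym uV vV wV by simp
      moreover have "d v c = d w c + 1" using e dd_def by simp
      ultimately have "d u v + d w c \<le> d u c" using alpha1[OF e(1) uV cV] by blast
      moreover have "d u v = d v u" using dist_sym uV vV by simp
      ultimately show False using rb[OF uV] ku e(2) dd2 k1 k_def r_def by linarith
    qed
    define G where "G u = {w \<in> X. d w u + 1 = k}" for u
    have B: "G u \<noteq> {}" if uV: "u \<in> V" and du: "d v u = k" for u
    proof -
      have uv: "v \<noteq> u" using du k1 k_def dist_self vV by auto
      obtain w' where w': "E v w'" "d w' u + 1 = k" using next_step[OF vV uV uv] du by auto
      have w'V: "w' \<in> V" using EV w' by auto
      have a1: "d v c \<le> d w' c + 1" using dist_adj[OF w'(1) cV] .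
      have a2: "d w' c \<le> d v c + 1" using dist_adj[OF Esym[OF w'(1)] cV] .
      show ?thesis
      proof (cases "d w' c + 1 = dd")
        case True then have "w' \<in> G u" unfolding G_def X_def using w' by simp
        then show ?thesis by auto
      next
        case F1: False
        show ?thesis
        proof (cases "d w' c = dd + 1")
          case True
          have "d c w' = d c v + 1" using True dd_def dist_sym cV vV w'V by simp
          moreover have "d v u = d w' u + 1" using w' du by simp
          ultimately have "d c v + d w' u \<le> d c u" using alpha1[OF w'(1) cV uV] by blast
          moreover have "d c v = dd" "d c u = d u c" using dist_sym cV vV uV dd_def by auto
          ultimately have False using rb[OF uV] w' k1 k_def r_def dd1 by linarith
          then show ?thesis ..
        next
          case False
          then have eq: "d w' c = dd" using F1 a1 a2 dd_def by linarith
          obtain z where z: "E v z" "E z w'" "d z c + 1 = dd"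
            using TC[OF w'(1) cV, of dd] eq dd_def dd1 by auto
          have zV: "z \<in> V" using EV z by auto
          have zX: "z \<in> X" using z X_def by simp
          have b1: "d v u \<le> d z u + 1" using dist_adj[OF z(1) uV] .
          have b2: "d z u \<le> d w' u + 1" using dist_adj[OF z(2) uV] .
          show ?thesis
          proof (cases "d z u + 1 = k")
            case True then have "z \<in> G u" unfolding G_def using zX by simp
            then show ?thesis by auto
          next
            case False
            then have "d z u = k" using b1 b2 w' du by linarith
            then have "d u z = d u w' + 1" using dist_sym uV zV w'V w' by simp
            moreover have "d w' c = d z c + 1" using eq z by simp
            ultimately have "d u w' + d z c \<le> d u c" using alpha1[OF Esym[OF z(2)] uV cV] by blast
            moreover have "d u w' = d w' u" using dist_sym uV w'V by simp
            ultimately have False using rb[OF uV] w' z dd2 k1 k_def r_def by linarith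
            then show ?thesis ..
          qed
        qed
      qed
    qed
    have C: "G u \<subseteq> G u' \<or> G u' \<subseteq> G u"
      if uV: "u \<in> V" and du: "d v u = k" and u'V: "u' \<in> V" and du': "d v u' = k" for u u'
    proof (rule ccontr)
      assume "\<not> ?thesis"
      then obtain w w' where w: "w \<in> G u" "w \<notin> G u'" and w': "w' \<in> G u'" "w' \<notin> G u" by blast
      have wX: "w \<in> X" "w' \<in> X" using w w' G_def by auto
      have ne: "w \<noteq> w'" using w w' by auto
      have ew: "E w w'" using clique[of v w w' c] wX X_def cV ne dd_def by auto
      have wV: "w \<in> V" "w' \<in> V" using wX XV by auto
      have ev: "E v w" "E v w'" using wX X_def by auto
      have l1: "d w u' \<le> k" using A0[OF wX(1) u'V] du' by simp
      have l2: "d w' u \<le> k" using A0[OF wX(2) uV] du by simp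
      have m1: "d v u' \<le> d w u' + 1" using dist_adj[OF ev(1) u'V] .
      have m2: "d v u \<le> d w' u + 1" using dist_adj[OF ev(2) uV] .
      have h1: "d w u' = k" using l1 m1 du' w(2) wX(1) unfolding G_def by auto
      have h2: "d w' u = k" using l2 m2 du w'(2) wX(2) unfolding G_def by auto
      have g1: "d w u + 1 = k" using w(1) G_def by simp
      have g2: "d w' u' + 1 = k" using w'(1) G_def by simp
      have "d u w' = d u w + 1" using dist_sym uV wV h2 g1 by simp
      moreover have "d w u' = d w' u' + 1" using h1 g2 by simp
      ultimately have "d u w + d w' u' \<le> d u u'" using alpha1[OF ew uV u'V] by blast
      moreover have "d u w = d w u" using dist_sym uV wV by simp
      moreover have "d u u' \<le> diam V E" using dist_diam uV u'V by blast
      ultimately show False using g1 g2 k2 k_def by linarith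
    qed
    define F where "F = {u \<in> V. d v u = k}"
    have finF: "finite F" "F \<noteq> {}" using finV ecc_ex[OF vV] k_def F_def by auto
    have "Min ((\<lambda>u. card (G u)) ` F) \<in> (\<lambda>u. card (G u)) ` F" using finF by (intro Min_in) auto
    then obtain u0 where u0: "u0 \<in> F" "card (G u0) = Min ((\<lambda>u. card (G u)) ` F)"
      by (metis (no_types, lifting) imageE)
    have finG: "finite (G u)" for u
    proof -
      have "G u \<subseteq> V" using XV unfolding G_def by auto
      then show ?thesis using finV finite_subset by blast
    qed
    have sub: "G u0 \<subseteq> G u" if uF: "u \<in> F" for u
    proof (rule ccontr)
      assume ns: "\<not> ?thesis"
      then have "G u \<subset> G u0" using C[of u0 u] u0(1) uF F_def by auto
      then have "card (G u) < card (G u0)" using psubset_card_mono finG by blast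
      moreover have "card (G u0) \<le> card (G u)" using u0(2) uF finF by simp
      ultimately show False by simp
    qed
    obtain w where w: "w \<in> G u0" using B u0(1) F_def by blast
    have wX: "w \<in> X" using w G_def by simp
    have ev: "E v w" using wX X_def by simp
    have "ec w \<le> k - 1"
    proof (rule ecc_le)
      fix u assume uV: "u \<in> V"
      have du: "d v u \<le> k" using ecc_ge[OF vV uV] k_def by simp
      have a: "d w u \<le> d v u + 1" using dist_adj[OF Esym[OF ev] uV] .
      show "d w u \<le> k - 1"
      proof (cases "d v u = k")
        case True
        then have "w \<in> G u" using sub[of u] w uV F_def by auto
        then have "d w u + 1 = k" using G_def by simp
        then show ?thesis by simp
      next
        case False
        show ?thesis
        proof (cases "d v u + 1 = k")
          case True then show ?thesis using A0[OF wX uV] by simp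
        next
          case False
          then show ?thesis using a du \<open>d v u \<noteq> k\<close> by linarith
        qed
      qed
    qed
    then show ?thesis using ev k_def k1 by (intro exI[of _ w]) auto
  qed
qed

lemma reach:
  assumes desc: "\<And>v. v \<in> V \<Longrightarrow> T < ec v \<Longrightarrow> \<exists>w. E v w \<and> ec w < ec v"
  shows "v \<in> V \<Longrightarrow> t \<in> V \<Longrightarrow> d v t = ec v \<Longrightarrow>
    \<exists>w\<in>V. d v w + d w t = d v t \<and> ec w \<le> T \<and> d w t = ec w"
proof (induction "ec v" arbitrary: v rule: less_induct)
  case less
  show ?case
  proof (cases "ec v \<le> T")
    case True
    then show ?thesis using less.prems dist_self by (intro bexI[of _ v]) auto
  next
    case False
    then obtain w where w: "E v w" "ec w < ec v" using desc less.prems by force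
    have wV: "w \<in> V" using EV w by auto
    have a: "d v t \<le> d w t + 1" using dist_adj[OF w(1) less.prems(2)] .
    have b: "d w t \<le> ec w" using ecc_ge wV less.prems by blast
    have wt: "d w t = ec w" using a b w less.prems by linarith
    obtain w'' where w'': "w'' \<in> V" "d w w'' + d w'' t = d w t" "ec w'' \<le> T" "d w'' t = ec w''"
      using less.hyps[OF w(2) wV less.prems(2) wt] by blast
    have "d v w'' \<le> d v w + d w w''" using dist_tri less.prems wV w'' by blast
    moreover have "d v t \<le> d v w'' + d w'' t" using dist_tri less.prems wV w'' by blast
    moreover have "d v w = 1" using dist_edge w by simp
    ultimately have "d v w'' + d w'' t = d v t" using w'' wt a b w less.prems by linarith
    then show ?thesis using w'' by blast
  qed
qed

end

theorem proposition7:
  fixes V :: "'a set" and E :: "'a \<Rightarrow> 'a \<Rightarrow> bool"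
  assumes "graph V E" and "connected V E" and "chordal V E"
  shows "(diam V E < 2 * rad V E \<longrightarrow>
            (\<forall>s\<in>V. \<forall>t\<in>far V E s. \<exists>w\<in>interval V E s t \<inter> center V E. t \<in> far V E w))
       \<and> (diam V E = 2 * rad V E \<longrightarrow>
            (\<forall>s\<in>V. \<forall>t\<in>far V E s. \<exists>w\<in>interval V E s t \<inter> center1 V E. t \<in> far V E w))"
proof -
  interpret cg V E using assms by unfold_locales
  have gen: "\<exists>w\<in>V. dist V E s w + dist V E w t = dist V E s t \<and> ecc V E w \<le> T \<and> dist V E t w = ecc V E w"
    if desc: "\<And>v. v \<in> V \<Longrightarrow> T < ecc V E v \<Longrightarrow> \<exists>w. E v w \<and> ecc V E w < ecc V E v"
      and sV: "s \<in> V" and tF: "t \<in> far V E s" for s t T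
  proof -
    have tV: "t \<in> V" and dt: "dist V E t s = ecc V E s" using tF unfolding far_def by auto
    have "dist V E s t = ecc V E s" using dt dist_sym sV tV by simp
    then obtain w where w: "w \<in> V" "dist V E s w + dist V E w t = dist V E s t"
      "ecc V E w \<le> T" "dist V E w t = ecc V E w"
      using reach[OF desc sV tV] by blast
    have "dist V E t w = ecc V E w" using dist_sym[OF w(1) tV] w(4) by simp
    then show ?thesis using w by blast
  qed
  have P1: "\<forall>s\<in>V. \<forall>t\<in>far V E s. \<exists>w\<in>interval V E s t \<inter> center V E. t \<in> far V E w"
    if h: "diam V E < 2 * rad V E"
  proof (intro ballI)
    fix s t assume sV: "s \<in> V" and tF: "t \<in> far V E s"
    have desc: "\<exists>w. E v w \<and> ecc V E w < ecc V E v" if "v \<in> V" "rad V E < ecc V E v" for v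
      using descent[OF that(1)] that h by simp
    obtain w where w: "w \<in> V" "dist V E s w + dist V E w t = dist V E s t"
      "ecc V E w \<le> rad V E" "dist V E t w = ecc V E w"
      using gen[OF desc sV tF] by blast
    have "ecc V E w = rad V E" using rad_le[OF w(1)] w(3) by simp
    then show "\<exists>w\<in>interval V E s t \<inter> center V E. t \<in> far V E w"
      using w tF unfolding interval_def center_def far_def by (intro bexI[of _ w]) auto
  qed
  have P2: "\<forall>s\<in>V. \<forall>t\<in>far V E s. \<exists>w\<in>interval V E s t \<inter> center1 V E. t \<in> far V E w"
    if h: "diam V E = 2 * rad V E"
  proof (intro ballI)
    fix s t assume sV: "s \<in> V" and tF: "t \<in> far V E s"
    have desc: "\<exists>w. E v w \<and> ecc V E w < ecc V E v" if "v \<in> V" "rad V E + 1 < ecc V E v" for v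
      using descent[OF that(1)] that h by simp
    obtain w where w: "w \<in> V" "dist V E s w + dist V E w t = dist V E s t"
      "ecc V E w \<le> rad V E + 1" "dist V E t w = ecc V E w"
      using gen[OF desc sV tF] by blast
    then show "\<exists>w\<in>interval V E s t \<inter> center1 V E. t \<in> far V E w"
      using w tF unfolding interval_def center1_def far_def by (intro bexI[of _ w]) auto
  qed
  show ?thesis using P1 P2 by blast
qed


end
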